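(* Let $K\subset\mathbf{R}^d$ ($d\ge1$) be a convex compact subset, $T:\mathscr{C}(K)\to\mathscr{C}(K)$ a Markov operator such that $T(h)=h$ for every continuous affine function $h$ on $K$, $a\ge0$, and $(\mu_n)_{n\ge1}$ a sequence of Borel probability measures on $K$. Then there exist constants $C,M>0$, not depending on $f$, such that for every $f\in\mathscr{C}(K)$ and $n\ge1$, $$\|C_n(f)-f\|_\infty\le C\Big(\frac{M}{n+a}\|f\|_\infty+\omega_2\Big(f,\sqrt{\tfrac{M}{n+a}}\Big)\Big).$$
   Context: A Markov operator is a positive linear operator $T$ on $\mathscr{C}(K)$ with $T(\mathbf{1})=\mathbf{1}$; $(\tilde\mu_x^T)_{x\in K}$ are the Borel probability measures with $\int_K f\,d\tilde\mu_x^T=T(f)(x)$. $C_n(f)(x)=\int_K\cdots\int_K f\big(\frac{x_1+\dots+x_n+a x_{n+1}}{n+a}\big)\,d\tilde\mu_x^T(x_1)\cdots d\tilde\mu_x^T(x_n)\,d\mu_n(x_{n+1})$. The second modulus of continuity is $\omega_2(f,\delta)=\sup\{|f(x)-2f(\frac{x+y}{2})+f(y)|:x,y\in K,\ \|x-y\|_2\le2\delta\}$, with $\|\cdot\|_2$ the Euclidean norm. *)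

theory Defs
  imports "HOL-Analysis.Analysis" "HOL-Probability.Probability"
begin

text \<open>Markov operator on C(K): positive linear operator mapping C(K) into C(K) with T 1 = 1.
  Functions are represented as total functions; only values on K matter.\<close>
definition markov_operator :: "'a::euclidean_space set \<Rightarrow> (('a \<Rightarrow> real) \<Rightarrow> ('a \<Rightarrow> real)) \<Rightarrow> bool" where
  "markov_operator K T \<longleftrightarrow>
     (\<forall>f. continuous_on K f \<longrightarrow> continuous_on K (T f)) \<and>
     (\<forall>f g c. continuous_on K f \<longrightarrow> continuous_on K g \<longrightarrow>
        (\<forall>x\<in>K. T (\<lambda>y. c * f y + g y) x = c * T f x + T g x)) \<and>
     (\<forall>f. continuous_on K f \<longrightarrow> (\<forall>y\<in>K. 0 \<le> f y) \<longrightarrow> (\<forall>x\<in>K. 0 \<le> T f x)) \<and>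
     (\<forall>x\<in>K. T (\<lambda>_. 1) x = 1)"

definition borel_prob_on :: "'a::euclidean_space set \<Rightarrow> 'a measure \<Rightarrow> bool" where
  "borel_prob_on K m \<longleftrightarrow> prob_space m \<and> sets m = sets (restrict_space borel K)"

text \<open>The operator C_n built from the representing measures nu x (= mu-tilde_x^T) and mu_n.\<close>
definition Cn :: "('a::euclidean_space \<Rightarrow> 'a measure) \<Rightarrow> (nat \<Rightarrow> 'a measure) \<Rightarrow> real \<Rightarrow> nat
                  \<Rightarrow> ('a \<Rightarrow> real) \<Rightarrow> 'a \<Rightarrow> real" where
  "Cn nu mu a n f x =
     (\<integral>xs. (\<integral>y. f ((1 / (real n + a)) *\<^sub>R ((\<Sum>i<n. xs i) + a *\<^sub>R y)) \<partial>(mu n))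
        \<partial>(PiM {..<n} (\<lambda>_. nu x)))"

definition omega2 :: "'a::euclidean_space set \<Rightarrow> ('a \<Rightarrow> real) \<Rightarrow> real \<Rightarrow> real" where
  "omega2 K f \<delta> = Sup {\<bar>f x - 2 * f ((1/2) *\<^sub>R (x + y)) + f y\<bar> | x y.
                        x \<in> K \<and> y \<in> K \<and> norm (x - y) \<le> 2 * \<delta>}"

definition supnorm :: "'a set \<Rightarrow> ('a \<Rightarrow> real) \<Rightarrow> real" where
  "supnorm K g = Sup ((\<lambda>x. \<bar>g x\<bar>) ` K)"

end

theory Submission
  imports Defs
begin

lemma seg_upper:
  fixes f :: "'a::euclidean_space \<Rightarrow> real"
  assumes K: "convex K" and fc: "continuous_on K f" and dp: "\<delta> > 0"
    and W: "\<And>x y. x\<in>K \<Longrightarrow> y\<in>K \<Longrightarrow> norm (x - y) \<le> 2*\<delta> \<Longrightarrow> f x - 2 * f ((1/2) *\<^sub>R (x+y)) + f y \<ge> -\<omega>"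
    and L: "\<omega> < 2*\<Lambda>*\<delta>^2"
    and u: "u\<in>K" and v: "v\<in>K" and t: "0\<le>t" "t\<le>1"
  shows "f ((1-t)*\<^sub>R u + t*\<^sub>R v) \<le> (1-t)*f u + t*f v + \<omega> + \<Lambda>*t*(1-t)*(norm(u-v))^2"
proof -
  have om: "\<omega> \<ge> 0" using W[OF u u] dp by simp
  have "0 < 2*\<Lambda>*\<delta>^2" using om L by linarith
  then have Lp: "\<Lambda> > 0" using dp by (simp add: zero_less_mult_iff)
  show ?thesis
  proof (cases "u = v")
    case True
    then show ?thesis using om Lp t by (simp add: algebra_simps flip: scaleR_add_left)
  next
    case False
    define D where "D = norm (u - v)"
    have Dp: "D > 0" using False by (simp add: D_def)
    define p where "p s = (1-s)*\<^sub>R u + s*\<^sub>R v" for s :: real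
    define ch where "ch s = f (p s) - (1-s)*f u - s*f v - \<Lambda>* s*(1-s)*D^2" for s :: real
    have pK: "p s \<in> K" if "s \<in> {0..1}" for s
      using that K u v unfolding p_def by (auto intro: convexD_alt)
    have pc: "continuous_on {0..1} p" unfolding p_def by (intro continuous_intros)
    have fp: "continuous_on {0..1} (f \<circ> p)"
      by (rule continuous_on_compose[OF pc]) (rule continuous_on_subset[OF fc], use pK in auto)
    have cc: "continuous_on {0..1} ch"
      unfolding ch_def using fp by (auto simp: o_def intro!: continuous_intros)
    obtain s0 where s0: "s0 \<in> {0..1}" and mx: "\<And>s. s \<in> {0..1} \<Longrightarrow> ch s \<le> ch s0"
      using continuous_attains_sup[OF compact_Icc _ cc] by fastforce
    define M where "M = ch s0"
    have c0: "ch 0 = 0" "ch 1 = 0" unfolding ch_def p_def by simp_all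
    define h where "h = min (min s0 (1-s0)) (\<delta>/D)"
    have h0: "h \<ge> 0" using s0 dp Dp by (auto simp: h_def)
    have s1: "s0 - h \<in> {0..1}" "s0 + h \<in> {0..1}" using s0 h0 by (auto simp: h_def)
    have pd: "p (s0 - h) - p (s0 + h) = (2*h) *\<^sub>R (u - v)"
      unfolding p_def by (simp add: algebra_simps scaleR_2 flip: scaleR_scaleR)
    have nd: "norm (p (s0 - h) - p (s0 + h)) \<le> 2*\<delta>"
    proof -
      have e: "norm (p (s0 - h) - p (s0 + h)) = 2*h*D" using pd h0 by (simp add: D_def)
      have hd: "h \<le> \<delta>/D" by (simp add: h_def)
      have "2*h*D \<le> 2*(\<delta>/D)*D" using Dp hd by (intro mult_right_mono) auto
      then show ?thesis using Dp e by simp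
    qed
    have "p (s0 - h) + p (s0 + h) = 2 *\<^sub>R p s0"
      unfolding p_def by (simp add: algebra_simps scaleR_2 flip: scaleR_scaleR)
    then have pm: "(1/2) *\<^sub>R (p (s0 - h) + p (s0 + h)) = p s0" by simp
    have Wf: "f (p (s0-h)) - 2 * f (p s0) + f (p (s0+h)) \<ge> -\<omega>"
      using W[OF pK[OF s1(1)] pK[OF s1(2)] nd] pm by simp
    have delta: "ch (s0-h) + ch (s0+h) - 2*ch s0 = (f (p (s0-h)) - 2 * f (p s0) + f (p (s0+h))) + 2*\<Lambda>*D^2*h^2"
      unfolding ch_def by (simp add: algebra_simps power2_eq_square)
    have le0: "ch (s0-h) + ch (s0+h) - 2*ch s0 \<le> 0" using mx[OF s1(1)] mx[OF s1(2)] by simp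
    have "M \<le> \<omega>"
    proof (cases "h = \<delta>/D")
      case True
      then have "2*\<Lambda>*D^2*h^2 = 2*\<Lambda>*\<delta>^2" using Dp by (simp add: power2_eq_square)
      then show ?thesis using delta le0 Wf L by linarith
    next
      case False
      then have "h = s0 \<or> h = 1 - s0" unfolding h_def by linarith
      moreover have "2*\<Lambda>*D^2*h^2 \<ge> 0" using Lp by simp
      moreover have "ch (s0-h) \<le> M" "ch (s0+h) \<le> M" using mx[OF s1(1)] mx[OF s1(2)] unfolding M_def by auto
      ultimately show ?thesis
      proof (elim disjE)
        assume "h = s0" then have "ch (s0-h) = 0" using c0 by simp
        then show ?thesis using delta Wf \<open>ch (s0+h) \<le> M\<close> \<open>2*\<Lambda>*D^2*h^2 \<ge> 0\<close> unfolding M_def by linarith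
      next
        assume "h = 1 - s0" then have "ch (s0+h) = 0" using c0 by simp
        then show ?thesis using delta Wf \<open>ch (s0-h) \<le> M\<close> \<open>2*\<Lambda>*D^2*h^2 \<ge> 0\<close> unfolding M_def by linarith
      qed
    qed
    then have "ch t \<le> \<omega>" using mx[of t] t unfolding M_def by auto
    then show ?thesis unfolding ch_def p_def D_def by (simp add: algebra_simps)
  qed
qed


lemma hull_bound:
  fixes F :: "'a::euclidean_space \<Rightarrow> real"
  assumes K: "convex K" and e: "\<epsilon> \<ge> 0"
    and AC: "\<And>u v t. u\<in>K \<Longrightarrow> v\<in>K \<Longrightarrow> 0\<le>t \<Longrightarrow> t\<le>1 \<Longrightarrow> F ((1-t)*\<^sub>R u + t*\<^sub>R v) \<le> (1-t)*F u + t*F v + \<epsilon>"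
    and S: "finite S" "S \<subseteq> (\<lambda>z. (z, F z)) ` K" "S \<noteq> {}"
  shows "\<forall>p\<in>convex hull S. fst p \<in> K \<and> F (fst p) \<le> snd p + (real (card S) - 1) * \<epsilon>"
  using S
proof (induction S rule: finite_induct)
  case empty then show ?case by simp
next
  case (insert q S)
  obtain z0 where z0: "z0 \<in> K" "q = (z0, F z0)" using insert.prems by auto
  show ?case
  proof (cases "S = {}")
    case True
    then show ?thesis using z0 by simp
  next
    case False
    have IH: "\<forall>p\<in>convex hull S. fst p \<in> K \<and> F (fst p) \<le> snd p + (real (card S) - 1) * \<epsilon>"
      using insert False by auto
    have cS: "real (card (insert q S)) = real (card S) + 1" using insert by simp
    have cS1: "real (card S) \<ge> 1" using False insert(1) by (simp add: Suc_leI card_gt_0_iff)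
    show ?thesis
    proof
      fix p assume "p \<in> convex hull (insert q S)"
      then obtain u v b where uv: "u \<ge> 0" "v \<ge> 0" "u + v = 1" and b: "b \<in> convex hull S"
          and pe: "p = u *\<^sub>R q + v *\<^sub>R b"
        using convex_hull_insert[OF False] by auto
      obtain bK: "fst b \<in> K" and bF: "F (fst b) \<le> snd b + (real (card S) - 1) * \<epsilon>" using IH b by auto
      have fp: "fst p = (1-v) *\<^sub>R z0 + v *\<^sub>R fst b" using pe z0 uv by simp
      have sp: "snd p = (1-v) * F z0 + v * snd b" using pe z0 uv by simp
      have v1: "v \<le> 1" using uv by simp
      have "fst p \<in> K" using fp K z0 bK uv v1 by (auto intro: convexD_alt)
      moreover have "F (fst p) \<le> (1-v) * F z0 + v * F (fst b) + \<epsilon>"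
        using AC[OF z0(1) bK uv(2) v1] fp by simp
      moreover have "v * F (fst b) \<le> v * (snd b + (real (card S) - 1) * \<epsilon>)"
        using bF uv(2) by (rule mult_left_mono)
      moreover have "v * ((real (card S) - 1) * \<epsilon>) \<le> (real (card S) - 1) * \<epsilon>"
        using v1 uv(2) e cS1 by (simp add: mult_left_le_one_le)
      ultimately show "fst p \<in> K \<and> F (fst p) \<le> snd p + (real (card (insert q S)) - 1) * \<epsilon>"
        using sp cS by (simp add: algebra_simps)
    qed
  qed
qed

lemma support_affine:
  fixes F :: "'a::euclidean_space \<Rightarrow> real"
  assumes K: "convex K" "compact K" and Fc: "continuous_on K F" and e: "\<epsilon> \<ge> 0"
    and AC: "\<And>u v t. u\<in>K \<Longrightarrow> v\<in>K \<Longrightarrow> 0\<le>t \<Longrightarrow> t\<le>1 \<Longrightarrow> F ((1-t)*\<^sub>R u + t*\<^sub>R v) \<le> (1-t)*F u + t*F v + \<epsilon>"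
    and m: "m \<in> K" and eta: "\<eta> > 0"
  shows "\<exists>w c. (\<forall>z\<in>K. inner w z + c \<le> F z) \<and> F m - (real DIM('a) + 1) * \<epsilon> - \<eta> \<le> inner w m + c"
proof -
  define G where "G = (\<lambda>z. (z, F z)) ` K"
  have cG: "compact G" unfolding G_def
    by (intro compact_continuous_image K continuous_on_Pair continuous_on_id Fc)
  have hb: "F (fst p) \<le> snd p + (real DIM('a) + 1) * \<epsilon>" if p: "p \<in> convex hull G" for p
  proof -
    obtain S where S: "finite S" "S \<subseteq> G" "card S \<le> DIM('a \<times> real) + 1" "p \<in> convex hull S"
      using p caratheodory[of G] by auto
    have "S \<noteq> {}" using S(4) by auto
    then have "F (fst p) \<le> snd p + (real (card S) - 1) * \<epsilon>"
      using hull_bound[OF K(1) e AC S(1) _ _] S G_def by blast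
    moreover have "real (card S) - 1 \<le> real DIM('a) + 1" using S(3) by simp
    ultimately show ?thesis using e by (smt (verit) mult_right_mono)
  qed
  define q where "q = (m, F m - (real DIM('a) + 1) * \<epsilon> - \<eta>)"
  have qn: "q \<notin> convex hull G"
  proof
    assume "q \<in> convex hull G"
    from hb[OF this] eta show False by (simp add: q_def)
  qed
  obtain A b where Ab: "inner A q < b" "\<forall>x\<in>convex hull G. inner A x > b"
    using separating_hyperplane_closed_point[OF convex_convex_hull compact_imp_closed[OF compact_convex_hull[OF cG]] qn]
    by blast
  obtain w0 c0 where A: "A = (w0, c0)" by (cases A)
  have mG: "(m, F m) \<in> convex hull G" using m by (auto simp: G_def intro: hull_inc)
  have i1: "inner w0 m + c0 * F m > b" using bspec[OF Ab(2) mG] A by (simp add: inner_prod_def)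
  have i2: "inner w0 m + c0 * (F m - (real DIM('a) + 1) * \<epsilon> - \<eta>) < b" using Ab(1) A by (simp add: inner_prod_def q_def)
  have pos: "(real DIM('a) + 1) * \<epsilon> + \<eta> > 0" using e eta by (simp add: add_nonneg_pos)
  have "c0 * ((real DIM('a) + 1) * \<epsilon> + \<eta>) > 0" using i1 i2 by (simp add: algebra_simps)
  then have c0p: "c0 > 0" using pos by (simp add: zero_less_mult_iff)
  show ?thesis
  proof (intro exI conjI ballI)
    fix z assume z: "z \<in> K"
    have "(z, F z) \<in> convex hull G" using z by (auto simp: G_def intro: hull_inc)
    then have "inner A (z, F z) > b" using Ab(2) by blast
    then have "inner w0 z + c0 * F z > b" using A by (simp add: inner_prod_def)
    then show "inner ((-1/c0) *\<^sub>R w0) z + b/c0 \<le> F z" using c0p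
      by (simp add: field_simps)
  next
    show "F m - (real DIM('a) + 1) * \<epsilon> - \<eta> \<le> inner ((-1/c0) *\<^sub>R w0) m + b/c0"
      using i2 c0p by (simp add: field_simps)
  qed
qed


locale Ictx =
  fixes K :: "'a::euclidean_space set" and P :: "'p measure" and Q :: "'a measure"
    and Zf :: "'p \<Rightarrow> 'a \<Rightarrow> 'a"
  assumes P: "prob_space P" and Q: "prob_space Q"
    and Zm: "(\<lambda>p. Zf (fst p) (snd p)) \<in> borel_measurable (P \<Otimes>\<^sub>M Q)"
    and ZK: "\<And>xs y. xs \<in> space P \<Longrightarrow> y \<in> space Q \<Longrightarrow> Zf xs y \<in> K"
    and cK: "compact K"
begin

definition I :: "('a \<Rightarrow> real) \<Rightarrow> real" where "I g = (\<integral>xs. (\<integral>y. g (Zf xs y) \<partial>Q) \<partial>P)"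

lemma gmeas:
  fixes g :: "'a \<Rightarrow> real"
  assumes g: "continuous_on K g"
  shows "(\<lambda>p. g (Zf (fst p) (snd p))) \<in> borel_measurable (P \<Otimes>\<^sub>M Q)"
proof -
  have "(\<lambda>p. Zf (fst p) (snd p)) \<in> measurable (P \<Otimes>\<^sub>M Q) (restrict_space borel K)"
    by (rule measurable_restrict_space2) (auto simp: space_pair_measure ZK intro: Zm)
  from measurable_comp[OF this borel_measurable_continuous_on_restrict[OF g]] show ?thesis
    by (simp add: comp_def)
qed

lemma gbound:
  fixes g :: "'a \<Rightarrow> real"
  assumes g: "continuous_on K g"
  obtains B where "\<And>z. z \<in> K \<Longrightarrow> \<bar>g z\<bar> \<le> B"
proof -
  have "bounded (g ` K)" using compact_continuous_image[OF g cK] compact_imp_bounded by blast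
  then obtain B where "\<forall>x\<in>g ` K. norm x \<le> B" by (auto simp: bounded_iff)
  then show ?thesis using that by auto
qed

lemma int_inner:
  fixes g :: "'a \<Rightarrow> real"
  assumes g: "continuous_on K g" and xs: "xs \<in> space P"
  shows "integrable Q (\<lambda>y. g (Zf xs y))"
proof -
  interpret Q: prob_space Q by (rule Q)
  obtain B where B: "\<And>z. z \<in> K \<Longrightarrow> \<bar>g z\<bar> \<le> B" using gbound[OF g] by blast
  have m: "(\<lambda>y. g (Zf xs y)) \<in> borel_measurable Q"
    using measurable_Pair2[OF gmeas[OF g] xs] by simp
  show ?thesis
    by (rule Q.integrable_const_bound[of _ B]) (use m B ZK[OF xs] in auto)
qed

lemma inner_bound:
  fixes g :: "'a \<Rightarrow> real"
  assumes g: "continuous_on K g" and xs: "xs \<in> space P" and B: "\<And>z. z \<in> K \<Longrightarrow> \<bar>g z\<bar> \<le> B"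
  shows "\<bar>\<integral>y. g (Zf xs y) \<partial>Q\<bar> \<le> B"
proof -
  interpret Q: prob_space Q by (rule Q)
  have b: "\<And>y. y \<in> space Q \<Longrightarrow> \<bar>g (Zf xs y)\<bar> \<le> B" using B ZK[OF xs] by blast
  have b1: "\<And>y. y \<in> space Q \<Longrightarrow> g (Zf xs y) \<le> B" "\<And>y. y \<in> space Q \<Longrightarrow> -B \<le> g (Zf xs y)"
    using b by (auto simp: abs_le_iff) (metis abs_le_iff b minus_le_iff)
  have "(\<integral>y. g (Zf xs y) \<partial>Q) \<le> B"
    by (rule Q.integral_le_const[OF int_inner[OF g xs]]) (rule AE_I2, erule b1(1))
  moreover have "-B \<le> (\<integral>y. g (Zf xs y) \<partial>Q)"
    by (rule Q.integral_ge_const[OF int_inner[OF g xs]]) (rule AE_I2, erule b1(2))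
  ultimately show ?thesis by simp
qed

lemma int_outer:
  fixes g :: "'a \<Rightarrow> real"
  assumes g: "continuous_on K g"
  shows "integrable P (\<lambda>xs. \<integral>y. g (Zf xs y) \<partial>Q)"
proof -
  interpret P: prob_space P by (rule P)
  interpret Q: prob_space Q by (rule Q)
  obtain B where B: "\<And>z. z \<in> K \<Longrightarrow> \<bar>g z\<bar> \<le> B" using gbound[OF g] by blast
  have e: "(\<lambda>(xs, y). g (Zf xs y)) = (\<lambda>p. g (Zf (fst p) (snd p)))" by auto
  have m: "(\<lambda>xs. \<integral>y. g (Zf xs y) \<partial>Q) \<in> borel_measurable P"
    by (rule Q.borel_measurable_lebesgue_integral) (simp add: e gmeas[OF g])
  show ?thesis
    by (rule P.integrable_const_bound[of _ B]) (use m inner_bound[OF g _ B] in auto)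
qed

lemma I_mono:
  fixes g :: "'a \<Rightarrow> real"
  assumes g: "continuous_on K g" and h: "continuous_on K h" and le: "\<And>z. z \<in> K \<Longrightarrow> g z \<le> h z"
  shows "I g \<le> I h"
  unfolding I_def
proof (rule integral_mono[OF int_outer[OF g] int_outer[OF h]])
  fix xs assume xs: "xs \<in> space P"
  interpret Q: prob_space Q by (rule Q)
  show "(\<integral>y. g (Zf xs y) \<partial>Q) \<le> (\<integral>y. h (Zf xs y) \<partial>Q)"
    by (rule integral_mono[OF int_inner[OF g xs] int_inner[OF h xs]]) (use le ZK[OF xs] in auto)
qed

lemma I_lin:
  fixes g :: "'a \<Rightarrow> real"
  assumes g: "continuous_on K g" and h: "continuous_on K h"
  shows "I (\<lambda>z. c * g z + h z) = c * I g + I h"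
proof -
  have "I (\<lambda>z. c * g z + h z) = (\<integral>xs. c * (\<integral>y. g (Zf xs y) \<partial>Q) + (\<integral>y. h (Zf xs y) \<partial>Q) \<partial>P)"
    unfolding I_def
    by (rule Bochner_Integration.integral_cong[OF refl]) (simp add: int_inner[OF g] int_inner[OF h])
  also have "\<dots> = c * I g + I h"
    unfolding I_def by (simp add: int_outer[OF g] int_outer[OF h])
  finally show ?thesis .
qed

lemma I_const: "I (\<lambda>z. c) = (c::real)"
proof -
  interpret P: prob_space P by (rule P)
  interpret Q: prob_space Q by (rule Q)
  show ?thesis unfolding I_def by (simp add: P.prob_space Q.prob_space)
qed

end

locale Cctx =
  fixes K :: "'a::euclidean_space set" and N Q :: "'a measure" and n :: nat and a :: real and x :: 'a
  assumes cvx: "convex K" and cpt: "compact K" and xK: "x \<in> K"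
    and Np: "prob_space N" and Ns: "sets N = sets (restrict_space borel K)"
    and Qp: "prob_space Q" and Qs: "sets Q = sets (restrict_space borel K)"
    and a0: "a \<ge> 0" and n1: "n \<ge> 1"
    and meanN: "\<And>w. (\<integral>y. inner w y \<partial>N) = inner w x"
begin

abbreviation "P \<equiv> PiM {..<n} (\<lambda>_. N)"
definition Zf :: "(nat \<Rightarrow> 'a) \<Rightarrow> 'a \<Rightarrow> 'a" where "Zf xs y = (1 / (real n + a)) *\<^sub>R ((\<Sum>i<n. xs i) + a *\<^sub>R y)"

lemma spN: "space N = K" using sets_eq_imp_space_eq[OF Ns] by (simp add: space_restrict_space)
lemma spQ: "space Q = K" using sets_eq_imp_space_eq[OF Qs] by (simp add: space_restrict_space)
lemma spP: "space P = PiE {..<n} (\<lambda>_. K)" by (simp add: space_PiM spN)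

lemma measN:
  fixes h :: "'a \<Rightarrow> 'b::topological_space"
  shows "continuous_on K h \<Longrightarrow> h \<in> borel_measurable N"
  using borel_measurable_continuous_on_restrict measurable_cong_sets[OF Ns refl] by blast
lemma measQ:
  fixes h :: "'a \<Rightarrow> 'b::topological_space"
  shows "continuous_on K h \<Longrightarrow> h \<in> borel_measurable Q"
  using borel_measurable_continuous_on_restrict measurable_cong_sets[OF Qs refl] by blast

lemma idN: "(\<lambda>y. y) \<in> borel_measurable N" using measN[OF continuous_on_id] by simp
lemma idQ: "(\<lambda>y. y) \<in> borel_measurable Q" using measQ[OF continuous_on_id] by simp

lemma compP: "i < n \<Longrightarrow> (\<lambda>xs. xs i) \<in> borel_measurable P"
  using measurable_comp[OF measurable_component_singleton[of i "{..<n}" "\<lambda>_. N"] idN] by (simp add: comp_def)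

lemma Zm: "(\<lambda>p. Zf (fst p) (snd p)) \<in> borel_measurable (P \<Otimes>\<^sub>M Q)"
proof -
  have c: "(\<lambda>p. fst p i) \<in> borel_measurable (P \<Otimes>\<^sub>M Q)" if "i < n" for i
    using measurable_comp[OF measurable_fst compP[OF that]] by (simp add: comp_def)
  have s: "(\<lambda>p. snd p) \<in> borel_measurable (P \<Otimes>\<^sub>M Q)"
    using measurable_comp[OF measurable_snd idQ] by (simp add: comp_def)
  show ?thesis unfolding Zf_def
    by (intro borel_measurable_scaleR borel_measurable_add borel_measurable_sum borel_measurable_const c s) auto
qed

lemma avgK: "xs \<in> space P \<Longrightarrow> (1 / real n) *\<^sub>R (\<Sum>i<n. xs i) \<in> K"
proof -
  assume xs: "xs \<in> space P"
  have "(\<Sum>i<n. (1 / real n) *\<^sub>R xs i) \<in> K"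
    by (rule convex_sum[OF _ cvx]) (use xs n1 in \<open>auto simp: spP\<close>)
  then show ?thesis by (simp add: scaleR_sum_right)
qed

lemma Zf_conv: "Zf xs y = (1 - a / (real n + a)) *\<^sub>R ((1 / real n) *\<^sub>R (\<Sum>i<n. xs i)) + (a / (real n + a)) *\<^sub>R y"
proof -
  have np: "real n > 0" using n1 by simp
  have e1: "1 - a / (real n + a) = real n / (real n + a)" using np a0 by (simp add: field_simps)
  have "Zf xs y = (1/(real n + a)) *\<^sub>R (\<Sum>i<n. xs i) + (a/(real n + a)) *\<^sub>R y"
    unfolding Zf_def by (simp only: scaleR_right_distrib scaleR_scaleR) simp
  also have "(1/(real n + a)) *\<^sub>R (\<Sum>i<n. xs i) = (real n / (real n + a)) *\<^sub>R ((1 / real n) *\<^sub>R (\<Sum>i<n. xs i))"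
    using np by (simp add: scaleR_scaleR)
  finally show ?thesis using e1 by simp
qed

lemma ZK: "xs \<in> space P \<Longrightarrow> y \<in> space Q \<Longrightarrow> Zf xs y \<in> K"
proof -
  assume xs: "xs \<in> space P" and y: "y \<in> space Q"
  have t: "0 \<le> a / (real n + a)" "a / (real n + a) \<le> 1" using a0 n1 by auto
  show ?thesis unfolding Zf_conv
    by (rule convexD_alt[OF cvx avgK[OF xs] _ t]) (use y spQ in auto)
qed

sublocale Ictx K P Q Zf
  unfolding Ictx_def using prob_space_PiM[of "{..<n}" "\<lambda>_. N"] Np Qp Zm ZK cpt by blast


lemma intN:
  fixes h :: "'a \<Rightarrow> real"
  assumes h: "continuous_on K h" shows "integrable N h"
proof -
  interpret N: prob_space N by (rule Np)
  obtain B where B: "\<And>z. z \<in> K \<Longrightarrow> \<bar>h z\<bar> \<le> B" using gbound[OF h] by blast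
  show ?thesis by (rule N.integrable_const_bound[of _ B]) (use measN[OF h] B spN in auto)
qed

lemma intQ:
  fixes h :: "'a \<Rightarrow> real"
  assumes h: "continuous_on K h" shows "integrable Q h"
proof -
  interpret Q: prob_space Q by (rule Qp)
  obtain B where B: "\<And>z. z \<in> K \<Longrightarrow> \<bar>h z\<bar> \<le> B" using gbound[OF h] by blast
  show ?thesis by (rule Q.integrable_const_bound[of _ B]) (use measQ[OF h] B spQ in auto)
qed

lemma single_int:
  fixes g :: "'a \<Rightarrow> real"
  assumes i: "i < n" and g: "continuous_on K g"
  shows "integrable P (\<lambda>xs. g (xs i)) \<and> (\<integral>xs. g (xs i) \<partial>P) = (\<integral>y. g y \<partial>N)"
proof -
  interpret PS: product_sigma_finite "\<lambda>_::nat. N"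
    unfolding product_sigma_finite_def using prob_space_imp_sigma_finite[OF Np] by blast
  interpret N: prob_space N by (rule Np)
  define f where "f j = (if j = i then g else (\<lambda>_. 1))" for j :: nat
  have fc: "continuous_on K (f j)" for j unfolding f_def using g by (auto intro: continuous_on_const)
  have fi: "integrable N (f j)" for j using intN[OF fc] .
  have e1: "(\<Prod>j<n. f j (xs j)) = g (xs i)" for xs
  proof -
    have "(\<Prod>j<n. f j (xs j)) = (\<Prod>j<n. if j = i then g (xs j) else 1)"
      by (rule prod.cong) (auto simp: f_def)
    then show ?thesis using i by (simp add: prod.delta)
  qed
  have e2: "(\<Prod>j<n. integral\<^sup>L N (f j)) = (\<integral>y. g y \<partial>N)"
  proof -
    have "(\<Prod>j<n. integral\<^sup>L N (f j)) = (\<Prod>j<n. if j = i then (\<integral>y. g y \<partial>N) else 1)"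
      by (rule prod.cong) (auto simp: f_def N.prob_space)
    then show ?thesis using i by (simp add: prod.delta)
  qed
  have "integrable P (\<lambda>xs. \<Prod>j<n. f j (xs j))" by (rule PS.product_integrable_prod) (auto intro: fi)
  moreover have "(\<integral>xs. (\<Prod>j<n. f j (xs j)) \<partial>P) = (\<Prod>j<n. integral\<^sup>L N (f j))"
    by (rule PS.product_integral_prod) (auto intro: fi)
  ultimately show ?thesis using e1 e2 by simp
qed

lemma pair_int:
  fixes g h :: "'a \<Rightarrow> real"
  assumes i: "i < n" and j: "j < n" and ij: "i \<noteq> j" and g: "continuous_on K g" and h: "continuous_on K h"
  shows "integrable P (\<lambda>xs. g (xs i) * h (xs j)) \<and> (\<integral>xs. g (xs i) * h (xs j) \<partial>P) = (\<integral>y. g y \<partial>N) * (\<integral>y. h y \<partial>N)"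
proof -
  interpret PS: product_sigma_finite "\<lambda>_::nat. N"
    unfolding product_sigma_finite_def using prob_space_imp_sigma_finite[OF Np] by blast
  interpret N: prob_space N by (rule Np)
  define f where "f k = (if k = i then g else if k = j then h else (\<lambda>_. 1))" for k :: nat
  have fc: "continuous_on K (f k)" for k unfolding f_def using g h by (auto intro: continuous_on_const)
  have fi: "integrable N (f k)" for k using intN[OF fc] .
  have e1: "(\<Prod>k<n. f k (xs k)) = g (xs i) * h (xs j)" for xs
  proof -
    have "(\<Prod>k<n. f k (xs k)) = (\<Prod>k<n. (if k = i then g (xs k) else 1) * (if k = j then h (xs k) else 1))"
      by (rule prod.cong) (use ij in \<open>auto simp: f_def\<close>)
    also have "\<dots> = (\<Prod>k<n. (if k = i then g (xs k) else 1)) * (\<Prod>k<n. (if k = j then h (xs k) else 1))"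
      by (rule prod.distrib)
    finally show ?thesis using i j by (simp add: prod.delta)
  qed
  have e2: "(\<Prod>k<n. integral\<^sup>L N (f k)) = (\<integral>y. g y \<partial>N) * (\<integral>y. h y \<partial>N)"
  proof -
    have "(\<Prod>k<n. integral\<^sup>L N (f k)) = (\<Prod>k<n. (if k = i then (\<integral>y. g y \<partial>N) else 1) * (if k = j then (\<integral>y. h y \<partial>N) else 1))"
      by (rule prod.cong) (use ij in \<open>auto simp: f_def N.prob_space\<close>)
    also have "\<dots> = (\<Prod>k<n. (if k = i then (\<integral>y. g y \<partial>N) else 1)) * (\<Prod>k<n. (if k = j then (\<integral>y. h y \<partial>N) else 1))"
      by (rule prod.distrib)
    finally show ?thesis using i j by (simp add: prod.delta)
  qed
  have "integrable P (\<lambda>xs. \<Prod>k<n. f k (xs k))" by (rule PS.product_integrable_prod) (auto intro: fi)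
  moreover have "(\<integral>xs. (\<Prod>k<n. f k (xs k)) \<partial>P) = (\<Prod>k<n. integral\<^sup>L N (f k))"
    by (rule PS.product_integral_prod) (auto intro: fi)
  ultimately show ?thesis using e1 e2 by simp
qed

end

context Cctx begin
definition mb where "mb = (\<Sum>b\<in>Basis. (\<integral>y. inner y b \<partial>Q) *\<^sub>R b)"

lemma meanQ: "(\<integral>y. inner w y \<partial>Q) = inner w mb"
proof -
  have ci: "continuous_on K (\<lambda>y. inner y b)" for b by (intro continuous_intros)
  have "(\<integral>y. inner w y \<partial>Q) = (\<integral>y. (\<Sum>b\<in>Basis. inner w b * inner y b) \<partial>Q)"
    by (subst euclidean_inner) (simp add: inner_commute)
  also have "\<dots> = (\<Sum>b\<in>Basis. inner w b * (\<integral>y. inner y b \<partial>Q))"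
    using intQ[OF ci] by (simp add: Bochner_Integration.integral_sum)
  also have "\<dots> = inner w mb" by (simp add: mb_def inner_sum_right mult.commute)
  finally show ?thesis .
qed

lemma mbK: "mb \<in> K"
proof (rule ccontr)
  assume nK: "mb \<notin> K"
  interpret Q: prob_space Q by (rule Qp)
  obtain A c where Ac: "inner A mb < c" "\<forall>y\<in>K. inner A y > c"
    using separating_hyperplane_closed_point[OF cvx compact_imp_closed[OF cpt] nK] by blast
  have cA: "continuous_on K (\<lambda>y. inner A y)" by (intro continuous_intros)
  have "c \<le> (\<integral>y. inner A y \<partial>Q)"
    by (rule Q.integral_ge_const[OF intQ[OF cA]]) (rule AE_I2, use Ac(2) spQ in \<open>auto intro: less_imp_le\<close>)
  then show False using Ac(1) meanQ[of A] by simp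
qed

definition tt where "tt = a / (real n + a)"
definition m where "m = (1 - tt) *\<^sub>R x + tt *\<^sub>R mb"

lemma tt_bounds: "0 \<le> tt" "tt \<le> 1" "1 - tt = real n / (real n + a)"
  using a0 n1 by (auto simp: tt_def field_simps)

lemma mK: "m \<in> K" unfolding m_def using tt_bounds by (intro convexD_alt[OF cvx xK mbK]) auto

lemma inner_Zf: "inner w (Zf xs y) = (1/(real n + a)) * (\<Sum>i<n. inner w (xs i)) + tt * inner w y"
  unfolding Zf_def tt_def by (simp add: inner_add_right inner_sum_right add_divide_distrib)

lemma I_affine: "I (\<lambda>z. inner w z + c) = inner w m + c"
proof -
  interpret P: prob_space P using prob_space_PiM[of "{..<n}" "\<lambda>_. N"] Np by blast
  interpret Q: prob_space Q by (rule Qp)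
  have ci: "continuous_on K (\<lambda>y. inner w y)" by (intro continuous_intros)
  have inn: "(\<integral>y. inner w (Zf xs y) + c \<partial>Q) = (1/(real n + a)) * (\<Sum>i<n. inner w (xs i)) + tt * inner w mb + c" for xs
  proof -
    have "(\<integral>y. inner w (Zf xs y) + c \<partial>Q) = (\<integral>y. ((1/(real n + a)) * (\<Sum>i<n. inner w (xs i)) + c) + tt * inner w y \<partial>Q)"
      by (simp add: inner_Zf algebra_simps)
    also have "\<dots> = (1/(real n + a)) * (\<Sum>i<n. inner w (xs i)) + c + tt * (\<integral>y. inner w y \<partial>Q)"
      using intQ[OF ci] by (simp add: Q.prob_space)
    finally show ?thesis by (simp add: meanQ)
  qed
  have sint: "integrable P (\<lambda>xs. inner w (xs i)) \<and> (\<integral>xs. inner w (xs i) \<partial>P) = inner w x" if "i < n" for i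
    using single_int[OF that ci] meanN by simp
  have isum: "integrable P (\<lambda>xs. \<Sum>i<n. inner w (xs i))" using sint by (intro Bochner_Integration.integrable_sum) auto
  have es: "(\<integral>xs. (\<Sum>i<n. inner w (xs i)) \<partial>P) = real n * inner w x"
  proof -
    have "(\<integral>xs. (\<Sum>i<n. inner w (xs i)) \<partial>P) = (\<Sum>i<n. (\<integral>xs. inner w (xs i) \<partial>P))"
      using sint by (intro Bochner_Integration.integral_sum) auto
    also have "\<dots> = (\<Sum>i<n. inner w x)" using sint by (intro sum.cong) auto
    finally show ?thesis by simp
  qed
  have "I (\<lambda>z. inner w z + c) = (\<integral>xs. (\<Sum>i<n. inner w (xs i)) / (real n + a) + (tt * inner w mb + c) \<partial>P)"
    unfolding I_def by (simp add: inn add.assoc)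
  also have "\<dots> = (\<integral>xs. (\<Sum>i<n. inner w (xs i)) / (real n + a) \<partial>P) + (tt * inner w mb + c)"
    using Bochner_Integration.integral_add[OF integrable_divide[OF isum] P.integrable_const[of "tt * inner w mb + c"]]
    by (simp add: P.prob_space)
  also have "\<dots> = (1/(real n + a)) * (real n * inner w x) + (tt * inner w mb + c)"
    using es by simp
  also have "\<dots> = inner w m + c"
  proof -
    have im: "inner w m = (1 - tt) * inner w x + tt * inner w mb" unfolding m_def by (simp add: inner_add_right)
    show ?thesis unfolding im tt_bounds(3) by (simp add: field_simps)
  qed
  finally show ?thesis .
qed


definition D where "D = diameter K"

lemma nbound: "y \<in> K \<Longrightarrow> z \<in> K \<Longrightarrow> norm (y - z) \<le> D"
  using diameter_bounded_bound[OF compact_imp_bounded[OF cpt]] by (simp add: D_def dist_norm)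

lemma D0: "D \<ge> 0" using nbound[OF xK xK] by simp

lemma var_N: "integrable N (\<lambda>y. (norm (y - x))^2) \<and> (\<integral>y. (norm (y - x))^2 \<partial>N) \<le> D^2"
proof -
  interpret N: prob_space N by (rule Np)
  have c: "continuous_on K (\<lambda>y. (norm (y - x))^2)" by (intro continuous_intros)
  have b: "(norm (y - x))^2 \<le> D^2" if "y \<in> K" for y
    using nbound[OF that xK] by (simp add: power_mono)
  show ?thesis using intN[OF c] by (auto intro!: N.integral_le_const AE_I2 simp: spN b)
qed

lemma cov_term:
  assumes i: "i < n" and j: "j < n"
  shows "integrable P (\<lambda>xs. inner (xs i - x) b * inner (xs j - x) b) \<and>
    (\<integral>xs. inner (xs i - x) b * inner (xs j - x) b \<partial>P) = (if i = j then (\<integral>y. (inner (y - x) b)^2 \<partial>N) else 0)"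
proof (cases "i = j")
  case True
  have c: "continuous_on K (\<lambda>y. (inner (y - x) b)^2)" by (intro continuous_intros)
  show ?thesis using single_int[OF i c] True by (simp add: power2_eq_square)
next
  case False
  interpret N: prob_space N by (rule Np)
  have c: "continuous_on K (\<lambda>y. inner (y - x) b)" by (intro continuous_intros)
  have cb: "continuous_on K (\<lambda>y. inner b y)" by (intro continuous_intros)
  have z: "(\<integral>y. inner (y - x) b \<partial>N) = 0"
  proof -
    have ee: "\<And>y. inner (y - x) b = inner b y - inner b x" by (metis inner_commute inner_diff_right)
    have "(\<integral>y. inner (y - x) b \<partial>N) = (\<integral>y. inner b y - inner b x \<partial>N)"
      by (simp only: ee)
    also have "\<dots> = (\<integral>y. inner b y \<partial>N) - inner b x"
      using intN[OF cb] by (simp add: N.prob_space)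
    finally show ?thesis using meanN by simp
  qed
  show ?thesis using pair_int[OF i j False c c] False z by simp
qed

lemma S_expand: "(norm (\<Sum>i<n. (xs i - x)))^2 = (\<Sum>b\<in>Basis. \<Sum>i<n. \<Sum>j<n. inner (xs i - x) b * inner (xs j - x) b)"
proof -
  have "(norm (\<Sum>i<n. (xs i - x)))^2 = (\<Sum>b\<in>Basis. inner (\<Sum>i<n. (xs i - x)) b * inner (\<Sum>i<n. (xs i - x)) b)"
    unfolding power2_norm_eq_inner by (subst euclidean_inner) (rule refl)
  also have "\<dots> = (\<Sum>b\<in>Basis. \<Sum>i<n. \<Sum>j<n. inner (xs i - x) b * inner (xs j - x) b)"
    by (simp add: inner_sum_left sum_product)
  finally show ?thesis .
qed

lemma var_P: "integrable P (\<lambda>xs. (norm (\<Sum>i<n. (xs i - x)))^2) \<and>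
   (\<integral>xs. (norm (\<Sum>i<n. (xs i - x)))^2 \<partial>P) \<le> real n * D^2"
proof -
  have ct: "\<And>b i j. i < n \<Longrightarrow> j < n \<Longrightarrow> integrable P (\<lambda>xs. inner (xs i - x) b * inner (xs j - x) b)"
    using cov_term by blast
  have int: "integrable P (\<lambda>xs. (\<Sum>b\<in>Basis. \<Sum>i<n. \<Sum>j<n. inner (xs i - x) b * inner (xs j - x) b))"
    using ct by (intro Bochner_Integration.integrable_sum) auto
  have cb: "continuous_on K (\<lambda>y. (inner (y - x) b)^2)" for b by (intro continuous_intros)
  have "(\<integral>xs. (\<Sum>b\<in>Basis. \<Sum>i<n. \<Sum>j<n. inner (xs i - x) b * inner (xs j - x) b) \<partial>P)
      = (\<Sum>b\<in>Basis. \<Sum>i<n. \<Sum>j<n. (\<integral>xs. inner (xs i - x) b * inner (xs j - x) b \<partial>P))"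
  proof -
    have ij: "(\<integral>xs. (\<Sum>i<n. \<Sum>j<n. inner (xs i - x) b * inner (xs j - x) b) \<partial>P)
       = (\<Sum>i<n. \<Sum>j<n. (\<integral>xs. inner (xs i - x) b * inner (xs j - x) b \<partial>P))" for b
    proof -
      have "(\<integral>xs. (\<Sum>i<n. \<Sum>j<n. inner (xs i - x) b * inner (xs j - x) b) \<partial>P)
         = (\<Sum>i<n. (\<integral>xs. (\<Sum>j<n. inner (xs i - x) b * inner (xs j - x) b) \<partial>P))"
        using ct by (intro Bochner_Integration.integral_sum Bochner_Integration.integrable_sum) auto
      also have "\<dots> = (\<Sum>i<n. \<Sum>j<n. (\<integral>xs. inner (xs i - x) b * inner (xs j - x) b \<partial>P))"
        using ct by (intro sum.cong refl Bochner_Integration.integral_sum) auto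
      finally show ?thesis .
    qed
    have "(\<integral>xs. (\<Sum>b\<in>Basis. \<Sum>i<n. \<Sum>j<n. inner (xs i - x) b * inner (xs j - x) b) \<partial>P)
       = (\<Sum>b\<in>Basis. (\<integral>xs. (\<Sum>i<n. \<Sum>j<n. inner (xs i - x) b * inner (xs j - x) b) \<partial>P))"
      using ct by (intro Bochner_Integration.integral_sum Bochner_Integration.integrable_sum) auto
    then show ?thesis using ij by simp
  qed
  also have "\<dots> = (\<Sum>b\<in>Basis. \<Sum>i<n. \<Sum>j<n. (if i = j then (\<integral>y. (inner (y - x) b)^2 \<partial>N) else 0))"
    using cov_term by (intro sum.cong refl) auto
  also have "\<dots> = (\<Sum>b\<in>Basis. real n * (\<integral>y. (inner (y - x) b)^2 \<partial>N))"
    by simp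
  also have "\<dots> = real n * (\<integral>y. (\<Sum>b\<in>Basis. (inner (y - x) b)^2) \<partial>N)"
    using intN[OF cb] by (simp add: Bochner_Integration.integral_sum sum_distrib_left)
  also have "\<dots> = real n * (\<integral>y. (norm (y - x))^2 \<partial>N)"
  proof -
    have "(\<Sum>b\<in>Basis. (inner (y - x) b)^2) = (norm (y - x))^2" for y
      unfolding power2_norm_eq_inner by (subst (2) euclidean_inner) (simp add: power2_eq_square)
    then show ?thesis by simp
  qed
  also have "\<dots> \<le> real n * D^2" using var_N by (intro mult_left_mono) auto
  finally show ?thesis using int S_expand by simp
qed

lemma I_quad: "I (\<lambda>z. (norm (z - m))^2) \<le> 2 * D^2 * (real n + a^2) / (real n + a)^2"
proof -
  interpret P: prob_space P using prob_space_PiM[of "{..<n}" "\<lambda>_. N"] Np by blast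
  interpret Q: prob_space Q by (rule Qp)
  have np: "real n + a > 0" using n1 a0 by simp
  define S where "S xs = (norm (\<Sum>i<n. (xs i - x)))^2" for xs
  have diff: "Zf xs y - m = (1/(real n + a)) *\<^sub>R (\<Sum>i<n. (xs i - x)) + tt *\<^sub>R (y - mb)" for xs y
  proof -
    have z: "Zf xs y = (1/(real n + a)) *\<^sub>R (\<Sum>i<n. xs i) + tt *\<^sub>R y"
      unfolding Zf_def tt_def by (simp only: scaleR_right_distrib scaleR_scaleR) simp
    have mm: "m = (real n/(real n + a)) *\<^sub>R x + tt *\<^sub>R mb" unfolding m_def tt_bounds(3) ..
    have b: "(1/(real n + a)) *\<^sub>R (\<Sum>i<n. (xs i - x)) = (1/(real n + a)) *\<^sub>R (\<Sum>i<n. xs i) - (real n/(real n + a)) *\<^sub>R x"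
      by (simp add: sum_subtractf scaleR_diff_right scaleR_scaleR sum_constant_scaleR)
    show ?thesis unfolding z mm b by (simp add: algebra_simps)
  qed
  have pt: "(norm (Zf xs y - m))^2 \<le> 2 * (S xs / (real n + a)^2) + 2 * (tt^2 * D^2)" if y: "y \<in> K" for xs y
  proof -
    have "(norm (Zf xs y - m))^2 \<le> (norm ((1/(real n + a)) *\<^sub>R (\<Sum>i<n. (xs i - x))) + norm (tt *\<^sub>R (y - mb)))^2"
      unfolding diff by (intro power_mono norm_triangle_ineq) simp
    also have "\<dots> \<le> 2 * (norm ((1/(real n + a)) *\<^sub>R (\<Sum>i<n. (xs i - x))))^2 + 2 * (norm (tt *\<^sub>R (y - mb)))^2"
      by (smt (verit) sum_squares_bound power2_sum)
    also have "(norm ((1/(real n + a)) *\<^sub>R (\<Sum>i<n. (xs i - x))))^2 = S xs / (real n + a)^2"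
      using np by (simp add: S_def power_divide power2_eq_square)
    also have "(norm (tt *\<^sub>R (y - mb)))^2 \<le> tt^2 * D^2"
    proof -
      have "(norm (y - mb))^2 \<le> D^2" using nbound[OF y mbK] by (simp add: power_mono)
      then show ?thesis by (simp add: power_mult_distrib mult_left_mono)
    qed
    finally show ?thesis by simp
  qed
  have qc: "continuous_on K (\<lambda>z. (norm (z - m))^2)" by (intro continuous_intros)
  have inner: "(\<integral>y. (norm (Zf xs y - m))^2 \<partial>Q) \<le> 2 * (S xs / (real n + a)^2) + 2 * (tt^2 * D^2)"
    if xs: "xs \<in> space P" for xs
    by (rule Q.integral_le_const[OF int_inner[OF qc xs]]) (rule AE_I2, rule pt, simp add: spQ)
  have vS: "integrable P S" "(\<integral>xs. S xs \<partial>P) \<le> real n * D^2" using var_P unfolding S_def by auto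
  have "I (\<lambda>z. (norm (z - m))^2) \<le> (\<integral>xs. 2 * (S xs / (real n + a)^2) + 2 * (tt^2 * D^2) \<partial>P)"
    unfolding I_def
    by (rule integral_mono[OF int_outer[OF qc]]) (use vS inner in auto)
  also have "\<dots> = 2 * ((\<integral>xs. S xs \<partial>P) / (real n + a)^2) + 2 * (tt^2 * D^2)"
    using vS(1) by (simp add: P.prob_space)
  also have "\<dots> \<le> 2 * (real n * D^2 / (real n + a)^2) + 2 * (tt^2 * D^2)"
    using vS(2) np by (simp add: divide_right_mono)
  also have "\<dots> = 2 * D^2 * (real n + a^2) / (real n + a)^2"
  proof -
    have "2 * (real n * D^2 / (real n + a)^2) + 2 * (tt^2 * D^2) = 2 * (real n * D^2 / (real n + a)^2) + 2 * (a^2 * D^2 / (real n + a)^2)"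
      unfolding tt_def by (simp add: power_divide)
    also have "\<dots> = (2 * (real n * D^2) + 2 * (a^2 * D^2)) / (real n + a)^2"
      by (simp add: add_divide_distrib)
    finally show ?thesis by (simp add: algebra_simps)
  qed
  finally show ?thesis .
qed

end

lemma quad_id:
  fixes u v m :: "'a::real_inner"
  shows "(norm ((1-t)*\<^sub>R u + t*\<^sub>R v - m))^2 + t*(1-t)*(norm(u-v))^2 = (1-t)*(norm(u-m))^2 + t*(norm(v-m))^2"
proof -
  have e: "(1-t)*\<^sub>R u + t*\<^sub>R v - m = (1-t)*\<^sub>R (u - m) + t*\<^sub>R (v - m)" by (simp add: algebra_simps)
  have e2: "u - v = (u - m) - (v - m)" by simp
  show ?thesis unfolding e e2
    by (simp add: power2_norm_eq_inner inner_diff_left inner_diff_right inner_add_left inner_add_right inner_commute[of "v - m" "u - m"] algebra_simps)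
qed

lemma eps_le:
  fixes X A E :: real
  assumes E: "E \<ge> 0" and h: "\<And>\<eta>. \<eta> > 0 \<Longrightarrow> X \<le> A + \<eta> * E"
  shows "X \<le> A"
proof (rule field_le_epsilon)
  fix e :: real assume e: "e > 0"
  have "X \<le> A + (e / (E + 1)) * E" using h[of "e/(E+1)"] e E by simp
  also have "(e / (E + 1)) * E \<le> e" using e E by (simp add: field_simps)
  finally show "X \<le> A + e" by simp
qed

context Cctx begin

lemma pointwise:
  fixes f :: "'a \<Rightarrow> real" and \<omega> B :: real
  assumes fc: "continuous_on K f" and B: "\<And>z. z\<in>K \<Longrightarrow> \<bar>f z\<bar> \<le> B"
    and W: "\<And>u v. u\<in>K \<Longrightarrow> v\<in>K \<Longrightarrow> norm (u - v) \<le> 2 * sqrt (1 / (real n + a)) \<Longrightarrow>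
              \<bar>f u - 2 * f ((1/2) *\<^sub>R (u + v)) + f v\<bar> \<le> \<omega>"
  shows "\<bar>I f - f x\<bar> \<le> (real DIM('a) + 2 + D^2 * (2 + 3*a)) * \<omega> + 2 * a * B / (real n + a)"
proof -
  define \<delta> where "\<delta> = sqrt (1 / (real n + a))"
  have np: "real n + a \<ge> 1" using n1 a0 by simp
  have dp: "\<delta> > 0" using np by (simp add: \<delta>_def)
  have d2: "\<delta>^2 = 1 / (real n + a)" using np by (simp add: \<delta>_def)
  have om: "\<omega> \<ge> 0" using W[OF xK xK] np by simp
  have B0: "B \<ge> 0" using B[OF xK] by simp
  define E where "E = D^2 * (2 + 3*a)"
  have E0: "E \<ge> 0" using a0 by (simp add: E_def)
  define Vb where "Vb = 2 * D^2 * (real n + a^2) / (real n + a)^2"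
  have VbE: "Vb + tt * D^2 \<le> E / (real n + a)"
  proof -
    have an: "0 \<le> a * real n" using a0 by simp
    have h1: "real n + a^2 \<le> (1+a)*(real n + a)" using a0 an by (simp add: algebra_simps power2_eq_square)
    have "(real n + a^2)/(real n + a)^2 \<le> (1+a)*(real n + a)/(real n + a)^2"
      by (rule divide_right_mono[OF h1]) simp
    also have "(1+a)*(real n + a)/(real n + a)^2 = (1+a)/(real n + a)" using np by (simp add: power2_eq_square)
    finally have h2: "(real n + a^2)/(real n + a)^2 \<le> (1+a)/(real n + a)" .
    have "Vb = 2 * D^2 * ((real n + a^2) / (real n + a)^2)" by (simp add: Vb_def)
    also have "\<dots> \<le> 2 * D^2 * ((1+a)/(real n + a))" by (rule mult_left_mono[OF h2]) simp
    finally have h3: "Vb \<le> 2 * D^2 * ((1+a)/(real n + a))" .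
    have e1: "2 * D^2 * ((1+a)/(real n + a)) + tt * D^2 = (2*D^2*(1+a) + a*D^2) / (real n + a)"
    proof -
      have e1a: "2 * D^2 * ((1+a)/(real n + a)) = (2*D^2*(1+a)) / (real n + a)" by (rule times_divide_eq_right)
      have e1b: "tt * D^2 = (a*D^2) / (real n + a)" by (simp add: tt_def)
      show ?thesis unfolding e1a e1b by (rule add_divide_distrib[symmetric])
    qed
    have e2: "2*D^2*(1+a) + a*D^2 = E" unfolding E_def by (simp add: algebra_simps)
    have "2 * D^2 * ((1+a)/(real n + a)) + tt * D^2 = E / (real n + a)" by (simp only: e1 e2)
    then show ?thesis using h3 by linarith
  qed
  have Wf: "f u - 2 * f ((1/2) *\<^sub>R (u+v)) + f v \<ge> -\<omega>" if "u\<in>K" "v\<in>K" "norm (u - v) \<le> 2*\<delta>" for u v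
    using W[OF that(1,2) that(3)[unfolded \<delta>_def]] by (simp add: abs_le_iff)
  have Wg: "(-f u) - 2 * (-f ((1/2) *\<^sub>R (u+v))) + (-f v) \<ge> -\<omega>" if "u\<in>K" "v\<in>K" "norm (u - v) \<le> 2*\<delta>" for u v
    using W[OF that(1,2) that(3)[unfolded \<delta>_def]] by (simp add: abs_le_iff)
  have gc: "continuous_on K (\<lambda>z. - f z)" using fc by (intro continuous_intros)
  have main: "\<bar>I f - f x\<bar> \<le> ((real DIM('a) + 2 + E) * \<omega> + 2 * a * B / (real n + a)) + \<eta> * (1 + E)"
    if eta: "\<eta> > 0" for \<eta>
  proof -
    define \<Lambda> where "\<Lambda> = \<omega> * (real n + a) + \<eta>"
    have L0: "\<Lambda> \<ge> 0" using om np eta by (simp add: \<Lambda>_def)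
    have Ld: "\<Lambda> / (real n + a) = \<omega> + \<eta> / (real n + a)"
      using np by (simp add: \<Lambda>_def add_divide_distrib)
    have LL: "\<omega> < 2*\<Lambda>*\<delta>^2"
    proof -
      have "2*\<Lambda>*\<delta>^2 = 2*(\<Lambda> / (real n + a))" by (simp add: d2)
      moreover have "\<eta>/(real n + a) > 0" using eta np by simp
      ultimately show ?thesis using om Ld by linarith
    qed
    have segf: "f ((1-t)*\<^sub>R u + t*\<^sub>R v) \<le> (1-t)*f u + t*f v + \<omega> + \<Lambda>*t*(1-t)*(norm(u-v))^2"
      if "u\<in>K" "v\<in>K" "0\<le>t" "t\<le>1" for u v t
      using seg_upper[OF cvx fc dp Wf LL that] by blast
    have segg: "-f ((1-t)*\<^sub>R u + t*\<^sub>R v) \<le> (1-t)*(-f u) + t*(-f v) + \<omega> + \<Lambda>*t*(1-t)*(norm(u-v))^2"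
      if "u\<in>K" "v\<in>K" "0\<le>t" "t\<le>1" for u v t
      using seg_upper[OF cvx gc dp Wg LL that] by blast
    have qc: "continuous_on K (\<lambda>z. (norm (z - m))^2)" by (intro continuous_intros)
    have jensen: "I h \<ge> h m - (real DIM('a) + 1) * \<omega> - \<eta> - \<Lambda> * Vb"
      if hc: "continuous_on K h" and segh: "\<And>u v t. u\<in>K \<Longrightarrow> v\<in>K \<Longrightarrow> 0\<le>t \<Longrightarrow> t\<le>1 \<Longrightarrow>
          h ((1-t)*\<^sub>R u + t*\<^sub>R v) \<le> (1-t)*h u + t*h v + \<omega> + \<Lambda>*t*(1-t)*(norm(u-v))^2" for h
    proof -
      define F where "F z = h z + \<Lambda> * (norm (z - m))^2" for z
      have Fc: "continuous_on K F" unfolding F_def using hc by (intro continuous_intros)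
      have AC: "F ((1-t)*\<^sub>R u + t*\<^sub>R v) \<le> (1-t)*F u + t*F v + \<omega>"
        if "u\<in>K" "v\<in>K" "0\<le>t" "t\<le>1" for u v t
      proof -
        have "h ((1-t)*\<^sub>R u + t*\<^sub>R v) \<le> (1-t)*h u + t*h v + \<omega> + \<Lambda>*(t*(1-t)*(norm(u-v))^2)"
          using segh[OF that] by (simp add: mult.assoc)
        moreover have "\<Lambda> * (norm ((1-t)*\<^sub>R u + t*\<^sub>R v - m))^2 + \<Lambda>*(t*(1-t)*(norm(u-v))^2) = (1-t)*(\<Lambda>*(norm(u-m))^2) + t*(\<Lambda>*(norm(v-m))^2)"
          using arg_cong[OF quad_id[of t u v m], of "\<lambda>r. \<Lambda> * r"] by (simp add: algebra_simps)
        ultimately show ?thesis unfolding F_def by (simp add: algebra_simps)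
      qed
      obtain w c where wc: "\<forall>z\<in>K. inner w z + c \<le> F z" "F m - (real DIM('a) + 1) * \<omega> - \<eta> \<le> inner w m + c"
        using support_affine[OF cvx cpt Fc om AC mK eta] by blast
      have lc: "continuous_on K (\<lambda>z. inner w z + c)" by (intro continuous_intros)
      have c1: "continuous_on K (\<lambda>z. (-\<Lambda>) * (norm (z - m))^2 + (inner w z + c))"
        by (intro continuous_intros)
      have "I (\<lambda>z. (-\<Lambda>) * (norm (z - m))^2 + (inner w z + c)) \<le> I h"
        by (rule I_mono[OF c1 hc]) (use wc(1) in \<open>force simp: F_def\<close>)
      moreover have "I (\<lambda>z. (-\<Lambda>) * (norm (z - m))^2 + (inner w z + c)) = (-\<Lambda>) * I (\<lambda>z. (norm (z - m))^2) + (inner w m + c)"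
        using I_lin[OF qc lc, of "-\<Lambda>"] I_affine by simp
      moreover have "\<Lambda> * I (\<lambda>z. (norm (z - m))^2) \<le> \<Lambda> * Vb"
        unfolding Vb_def by (rule mult_left_mono[OF I_quad L0])
      moreover have "F m = h m" by (simp add: F_def)
      ultimately show ?thesis using wc(2) by linarith
    qed
    have j1: "I f \<ge> f m - (real DIM('a) + 1) * \<omega> - \<eta> - \<Lambda> * Vb" by (rule jensen[OF fc segf])
    have j2: "I (\<lambda>z. - f z) \<ge> - f m - (real DIM('a) + 1) * \<omega> - \<eta> - \<Lambda> * Vb" by (rule jensen[OF gc segg])
    have Ineg: "I (\<lambda>z. - f z) = - I f"
      using I_lin[OF fc continuous_on_const, of "-1" 0] I_const by simp
    have J: "\<bar>I f - f m\<bar> \<le> (real DIM('a) + 1) * \<omega> + \<eta> + \<Lambda> * Vb" using j1 j2 Ineg by linarith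
    have mx: "m = (1-tt)*\<^sub>R x + tt*\<^sub>R mb" by (simp add: m_def)
    have dxm: "(norm (x - mb))^2 \<le> D^2" using nbound[OF xK mbK] by (simp add: power_mono)
    have t1: "tt * (1 - tt) \<le> tt" by (rule mult_left_le) (use tt_bounds(1,2) in auto)
    define R where "R = \<Lambda>*tt*(1-tt)*(norm(x-mb))^2"
    have Lt: "R \<le> \<Lambda> * (tt * D^2)"
    proof -
      have "(tt*(1-tt))*(norm(x-mb))^2 \<le> tt * D^2"
        by (rule mult_mono[OF t1 dxm]) (use tt_bounds in auto)
      then have "\<Lambda> * ((tt*(1-tt))*(norm(x-mb))^2) \<le> \<Lambda> * (tt * D^2)" using L0 by (rule mult_left_mono)
      then show ?thesis unfolding R_def by (simp add: mult.assoc)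
    qed
    have b1: "f m \<le> (1-tt)*f x + tt*f mb + \<omega> + R"
      unfolding mx R_def using segf[OF xK mbK tt_bounds(1,2)] .
    have b2: "-f m \<le> (1-tt)*(-f x) + tt*(-f mb) + \<omega> + R"
      unfolding mx R_def using segg[OF xK mbK tt_bounds(1,2)] .
    have b1': "f m \<le> f x - tt*f x + tt*f mb + \<omega> + R" using b1 by (simp only: left_diff_distrib mult_1_left)
    have b2': "-f m \<le> -f x + tt*f x - tt*f mb + \<omega> + R" using b2 by (simp only: left_diff_distrib mult_1_left mult_minus_right)
    have fb1: "f mb - f x \<le> 2 * B" "f x - f mb \<le> 2 * B" using B[OF mbK] B[OF xK] by (simp_all add: abs_le_iff)
    have p1: "tt * (f mb - f x) \<le> tt * (2*B)" using fb1(1) tt_bounds(1) by (rule mult_left_mono)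
    have p2: "tt * (f x - f mb) \<le> tt * (2*B)" using fb1(2) tt_bounds(1) by (rule mult_left_mono)
    have p1': "tt * f mb - tt * f x \<le> tt * (2*B)" using p1 by (simp only: right_diff_distrib)
    have p2': "tt * f x - tt * f mb \<le> tt * (2*B)" using p2 by (simp only: right_diff_distrib)
    have Bi: "\<bar>f m - f x\<bar> \<le> tt * (2*B) + \<omega> + \<Lambda> * (tt * D^2)"
      using b1' b2' p1' p2' Lt by (simp only: abs_le_iff) linarith
    have tri: "\<bar>I f - f x\<bar> \<le> \<bar>I f - f m\<bar> + \<bar>f m - f x\<bar>" by linarith
    have dist: "\<Lambda> * (Vb + tt * D^2) = \<Lambda> * Vb + \<Lambda> * (tt * D^2)" by (simp add: distrib_left)
    have c1: "\<Lambda> * (Vb + tt * D^2) \<le> \<Lambda> * (E / (real n + a))" using VbE L0 by (rule mult_left_mono)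
    have c2: "\<Lambda> * (E / (real n + a)) = \<omega> * E + \<eta> * E / (real n + a)"
      using np by (simp add: \<Lambda>_def field_simps)
    have c3: "\<eta> * E / (real n + a) \<le> \<eta> * E"
    proof -
      have "\<eta> * E * 1 \<le> \<eta> * E * (real n + a)" using np eta E0 by (intro mult_left_mono) auto
      then show ?thesis using np by (simp add: pos_divide_le_eq)
    qed
    have c4: "tt * (2*B) = 2 * a * B / (real n + a)" by (simp add: tt_def)
    have "\<bar>I f - f x\<bar> \<le> (real DIM('a) + 1) * \<omega> + \<eta> + \<Lambda> * Vb + (tt * (2*B) + \<omega> + \<Lambda> * (tt * D^2))"
      using tri J Bi by linarith
    also have "\<dots> = (real DIM('a) + 2) * \<omega> + \<eta> + \<Lambda> * (Vb + tt * D^2) + tt * (2*B)"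
      using dist by (simp add: algebra_simps)
    also have "\<dots> \<le> (real DIM('a) + 2) * \<omega> + \<eta> + (\<omega> * E + \<eta> * E) + 2 * a * B / (real n + a)"
      using c1 c2 c3 c4 by linarith
    also have "\<dots> = ((real DIM('a) + 2 + E) * \<omega> + 2 * a * B / (real n + a)) + \<eta> * (1 + E)"
      by (simp add: algebra_simps)
    finally show ?thesis .
  qed
  have "\<bar>I f - f x\<bar> \<le> (real DIM('a) + 2 + E) * \<omega> + 2 * a * B / (real n + a)"
    by (rule eps_le[of "1 + E"]) (use E0 main in auto)
  then show ?thesis by (simp add: E_def)
qed

end

lemma Cn_pointwise:
  fixes K :: "'a::euclidean_space set"
    and T :: "('a \<Rightarrow> real) \<Rightarrow> ('a \<Rightarrow> real)"
    and nu :: "'a \<Rightarrow> 'a measure"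
    and mu :: "nat \<Rightarrow> 'a measure"
    and a :: real and f :: "'a \<Rightarrow> real" and \<omega> B :: real
  assumes cvx: "convex K" and cpt: "compact K"
    and aff: "\<forall>w c. \<forall>x\<in>K. T (\<lambda>y. inner w y + c) x = inner w x + c"
    and nuP: "\<forall>x\<in>K. borel_prob_on K (nu x)"
    and rep: "\<forall>f. continuous_on K f \<longrightarrow> (\<forall>x\<in>K. (\<integral>y. f y \<partial>(nu x)) = T f x)"
    and a0: "a \<ge> 0"
    and muP: "\<forall>n\<ge>1. borel_prob_on K (mu n)"
    and n1: "n \<ge> 1" and xK: "x \<in> K"
    and fc: "continuous_on K f" and B: "\<And>z. z\<in>K \<Longrightarrow> \<bar>f z\<bar> \<le> B"
    and W: "\<And>u v. u\<in>K \<Longrightarrow> v\<in>K \<Longrightarrow> norm (u - v) \<le> 2 * sqrt (1 / (real n + a)) \<Longrightarrow>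
              \<bar>f u - 2 * f ((1/2) *\<^sub>R (u + v)) + f v\<bar> \<le> \<omega>"
  shows "\<bar>Cn nu mu a n f x - f x\<bar> \<le> (real DIM('a) + 2 + (diameter K)^2 * (2 + 3*a)) * \<omega> + 2 * a * B / (real n + a)"
proof -
  have nx: "prob_space (nu x)" "sets (nu x) = sets (restrict_space borel K)"
    using nuP xK by (auto simp: borel_prob_on_def)
  have mn: "prob_space (mu n)" "sets (mu n) = sets (restrict_space borel K)"
    using muP n1 by (auto simp: borel_prob_on_def)
  have meanN: "(\<integral>y. inner w y \<partial>(nu x)) = inner w x" for w
  proof -
    have c: "continuous_on K (\<lambda>y. inner w y)" by (intro continuous_intros)
    have "(\<integral>y. inner w y \<partial>(nu x)) = T (\<lambda>y. inner w y) x" using rep[rule_format, OF c xK] .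
    also have "\<dots> = inner w x"
    proof -
      have "T (\<lambda>y. inner w y + 0) x = inner w x + 0" using aff xK by blast
      then show ?thesis by simp
    qed
    finally show ?thesis .
  qed
  interpret X: Cctx K "nu x" "mu n" n a x
    by (rule Cctx.intro) (rule cvx cpt xK nx mn a0 n1 meanN)+
  have e: "Cn nu mu a n f x = X.I f" by (simp add: Cn_def X.I_def X.Zf_def)
  show ?thesis using X.pointwise[OF fc B W] unfolding e X.D_def by simp
qed

theorem proposition3p5:
  fixes K :: "'a::euclidean_space set"
    and T :: "('a \<Rightarrow> real) \<Rightarrow> ('a \<Rightarrow> real)"
    and nu :: "'a \<Rightarrow> 'a measure"
    and mu :: "nat \<Rightarrow> 'a measure"
    and a :: real
  assumes "convex K" and "compact K" and "K \<noteq> {}"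
    and "markov_operator K T"
    and "\<forall>w c. \<forall>x\<in>K. T (\<lambda>y. inner w y + c) x = inner w x + c"
    and "\<forall>x\<in>K. borel_prob_on K (nu x)"
    and "\<forall>f. continuous_on K f \<longrightarrow> (\<forall>x\<in>K. (\<integral>y. f y \<partial>(nu x)) = T f x)"
    and "a \<ge> 0"
    and "\<forall>n\<ge>1. borel_prob_on K (mu n)"
  shows "\<exists>C M. C > 0 \<and> M > 0 \<and>
    (\<forall>f n. continuous_on K f \<longrightarrow> n \<ge> 1 \<longrightarrow>
       supnorm K (\<lambda>x. Cn nu mu a n f x - f x)
         \<le> C * (M / (real n + a) * supnorm K f + omega2 K f (sqrt (M / (real n + a)))))"
proof -
  note hyps = assms
  define C where "C = real DIM('a) + 2 + (diameter K)^2 * (2 + 3*a) + 2 * a + 1"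
  have "(diameter K)^2 * (2 + 3*a) \<ge> 0" using assms(8) by simp
  then have C0: "C > 0" using assms(8) unfolding C_def by linarith
  show ?thesis
  proof (rule exI[of _ C], rule exI[of _ "1::real"], intro conjI allI impI)
    show "C > 0" by (fact C0)
    show "(1::real) > 0" by simp
    fix f :: "'a \<Rightarrow> real" and n :: nat
    assume fc: "continuous_on K f" and n1: "n \<ge> 1"
    have np: "real n + a \<ge> 1" using n1 assms(8) by simp
    define B where "B = supnorm K f"
    define \<omega> where "\<omega> = omega2 K f (sqrt (1 / (real n + a)))"
    have bdd: "bounded (f ` K)" using compact_continuous_image[OF fc assms(2)] compact_imp_bounded by blast
    then obtain Bf where Bf: "\<And>z. z \<in> K \<Longrightarrow> \<bar>f z\<bar> \<le> Bf" by (auto simp: bounded_iff)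
    have bddi: "bdd_above ((\<lambda>x. \<bar>f x\<bar>) ` K)" using Bf by (auto intro!: bdd_aboveI)
    have fB: "\<bar>f z\<bar> \<le> B" if "z \<in> K" for z unfolding B_def supnorm_def
      by (rule cSup_upper) (use that bddi in auto)
    have W: "\<bar>f u - 2 * f ((1/2) *\<^sub>R (u + v)) + f v\<bar> \<le> \<omega>"
      if "u\<in>K" "v\<in>K" "norm (u - v) \<le> 2 * sqrt (1 / (real n + a))" for u v
    proof -
      have mid: "(1/2) *\<^sub>R (u + v) \<in> K"
        using convexD[OF assms(1) that(1,2), of "1/2" "1/2"] by (simp add: scaleR_add_right)
      have bdd2: "bdd_above {\<bar>f x - 2 * f ((1/2) *\<^sub>R (x + y)) + f y\<bar> | x y.
                        x \<in> K \<and> y \<in> K \<and> norm (x - y) \<le> 2 * sqrt (1 / (real n + a))}"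
      proof (rule bdd_aboveI[of _ "4 * Bf"], clarify)
        fix x y assume xy: "x \<in> K" "y \<in> K"
        have "(1/2) *\<^sub>R (x + y) \<in> K"
          using convexD[OF assms(1) xy, of "1/2" "1/2"] by (simp add: scaleR_add_right)
        then show "\<bar>f x - 2 * f ((1/2) *\<^sub>R (x + y)) + f y\<bar> \<le> 4 * Bf"
          using Bf[OF xy(1)] Bf[OF xy(2)] Bf[of "(1/2) *\<^sub>R (x + y)"] by linarith
      qed
      show ?thesis unfolding \<omega>_def omega2_def
        by (rule cSup_upper[OF _ bdd2]) (use that in blast)
    qed
    obtain x0 where x0: "x0 \<in> K" using assms(3) by blast
    have om: "\<omega> \<ge> 0" using W[OF x0 x0] np by simp
    have B0: "B \<ge> 0" using fB[OF x0] by simp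
    have pt: "\<bar>Cn nu mu a n f x - f x\<bar> \<le> C * (1 / (real n + a) * B + \<omega>)" if x: "x \<in> K" for x
    proof -
      have h: "\<bar>Cn nu mu a n f x - f x\<bar> \<le> (real DIM('a) + 2 + (diameter K)^2 * (2 + 3*a)) * \<omega> + 2 * a * B / (real n + a)"
        using Cn_pointwise[OF assms(1,2,5,6,7,8,9) n1 x fc fB W] by blast
      have h1: "(real DIM('a) + 2 + (diameter K)^2 * (2 + 3*a)) * \<omega> \<le> C * \<omega>"
        by (rule mult_right_mono[OF _ om]) (use assms(8) in \<open>simp add: C_def\<close>)
      have bn: "B / (real n + a) \<ge> 0" using B0 np by simp
      have h2: "2 * a * (B / (real n + a)) \<le> C * (B / (real n + a))"
        by (rule mult_right_mono[OF _ bn]) (use assms(8) in \<open>simp add: C_def\<close>)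
      have "C * (1 / (real n + a) * B + \<omega>) = C * (B / (real n + a)) + C * \<omega>" by (simp add: algebra_simps)
      moreover have "2 * a * B / (real n + a) = 2 * a * (B / (real n + a))" by simp
      ultimately show ?thesis using h h1 h2 by linarith
    qed
    have "supnorm K (\<lambda>x. Cn nu mu a n f x - f x) \<le> C * (1 / (real n + a) * B + \<omega>)"
      unfolding supnorm_def by (rule cSup_least) (use assms(3) pt in auto)
    then show "supnorm K (\<lambda>x. Cn nu mu a n f x - f x)
         \<le> C * (1 / (real n + a) * supnorm K f + omega2 K f (sqrt (1 / (real n + a))))"
      unfolding B_def \<omega>_def .
  qed
qed


end
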